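(* Consider a first-price auction with participation revelation in an environment where the number of agents is random, drawn from a commonly known distribution with at least two agents almost surely. Agents have independent private valuations drawn i.i.d. from a continuous distribution $F$ and are risk-neutral. Then there exists an equilibrium in which every agent $i$ registers (indicates the intention to participate) and then bids $b^e(v_i,n)$, where $n$ is the number of registered bidders announced by the auctioneer.
   Context: First-price auction with participation revelation: (1) agents indicate their intention to bid (register); (2) the auctioneer announces $n$, the number of registered agents; (3) registered agents submit sealed bids, and only bids of registered agents are accepted; (4) the highest bidder receives the good and pays his bid, and all other agents pay $0$. There is no participation fee. An agent with valuation $v$ who wins and pays $t$ gets utility $v-t$; an agent who does not win and pays nothing gets $0$. For an integer $m\ge 2$, $b^e(v,m)=v-F(v)^{-(m-1)}\int_0^v F(u)^{m-1}\,du$. *)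

theory Defs
  imports "HOL-Probability.Probability"
begin

definition be :: "(real \<Rightarrow> real) \<Rightarrow> real \<Rightarrow> nat \<Rightarrow> real" where
  "be F v m = v - inverse (F v ^ (m - 1)) * integral {0..v} (\<lambda>u. F u ^ (m - 1))"

text \<open>The highest bid wins and pays its bid; ties are broken
  uniformly at random; losers pay 0.\<close>
definition win_util :: "real measure \<Rightarrow> (real \<Rightarrow> real) \<Rightarrow> nat \<Rightarrow> real \<Rightarrow> real \<Rightarrow> real" where
  "win_util M beta k v b =
     (\<integral>\<omega>. (if (\<forall>j<k. beta (\<omega> j) \<le> b)
            then (v - b) / real (Suc (card {j. j < k \<and> beta (\<omega> j) = b}))
            else 0) \<partial>(PiM {..<k} (\<lambda>_. M)))"

text \<open>Interim expected payoff of an agent with valuation v, whose belief about the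
  number n of registered agents (counting himself, when he registers) is q, when all
  other agents register and bid strat w n, and he chooses registration r and bid
  function d (of the announced n).\<close>
definition interim_payoff ::
  "real measure \<Rightarrow> (real \<Rightarrow> nat \<Rightarrow> real) \<Rightarrow> nat pmf \<Rightarrow> real \<Rightarrow> bool \<Rightarrow> (nat \<Rightarrow> real) \<Rightarrow> real" where
  "interim_payoff M strat q v r d =
     measure_pmf.expectation q
       (\<lambda>n. if r then win_util M (\<lambda>w. strat w n) (n - 1) v (d n) else 0)"

definition all_register_equilibrium ::
  "real measure \<Rightarrow> nat pmf \<Rightarrow> (real \<Rightarrow> nat \<Rightarrow> real) \<Rightarrow> bool" where
  "all_register_equilibrium M p strat \<longleftrightarrow>
     (AE v in M. \<forall>q. set_pmf q \<subseteq> set_pmf p \<longrightarrow>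
        (\<forall>r d. interim_payoff M strat q v r d \<le> interim_payoff M strat q v True (strat v)))"

end

theory Submission
  imports Defs
begin

lemma prod_prob:
  fixes k :: nat
  assumes M: "prob_space M" and A: "A \<in> sets M"
  shows "measure (PiM {..<k} (\<lambda>_. M)) {\<omega>\<in>space (PiM {..<k} (\<lambda>_. M)). \<forall>j<k. \<omega> j \<in> A} = measure M A ^ k"
proof -
  interpret M: prob_space M by (rule M)
  interpret finite_product_sigma_finite "\<lambda>_. M" "{..<k}"
    by unfold_locales auto
  have "{\<omega>\<in>space (PiM {..<k} (\<lambda>_. M)). \<forall>j<k. \<omega> j \<in> A} = (\<Pi>\<^sub>E i\<in>{..<k}. A)"
    using sets.sets_into_space[OF A] by (auto simp: space_PiM PiE_iff extensional_def)
  moreover have "emeasure (PiM {..<k} (\<lambda>_. M)) (\<Pi>\<^sub>E i\<in>{..<k}. A) = emeasure M A ^ k"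
    using measure_times[of "\<lambda>_. A"] A by simp
  ultimately show ?thesis
    by (intro measure_eq_emeasure_eq_ennreal) (auto simp: M.emeasure_eq_measure ennreal_power)
qed

lemma card_sum: "real (card {j. j < (k::nat) \<and> P j}) = (\<Sum>j<k. if P j then 1 else 0)"
  by (induction k) (auto simp: Collect_conj_eq less_Suc_eq conj_disj_distribL Collect_disj_eq card_insert_if)

lemma integrand_meas:
  fixes k :: nat and beta :: "real \<Rightarrow> real"
  assumes beta: "beta \<in> borel_measurable borel" and sM: "sets M = sets borel"
  shows "(\<lambda>\<omega>. if (\<forall>j<k. beta (\<omega> j) \<le> b)
            then (v - b) / real (Suc (card {j. j < k \<and> beta (\<omega> j) = b}))
            else 0) \<in> borel_measurable (PiM {..<k} (\<lambda>_. M))"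
proof -
  have bj: "(\<lambda>\<omega>. beta (\<omega> j)) \<in> borel_measurable (PiM {..<k} (\<lambda>_. M))" for j
  proof (cases "j < k")
    case True
    have "beta \<in> borel_measurable M" by (subst measurable_cong_sets[OF sM refl]) (rule beta)
    then show ?thesis using True measurable_compose[OF measurable_component_singleton[of j "{..<k}" "\<lambda>_. M"]] by simp
  next
    case False
    have "(\<lambda>\<omega>. beta (\<omega> j)) \<in> borel_measurable (PiM {..<k} (\<lambda>_. M)) \<longleftrightarrow> (\<lambda>\<omega>. beta undefined) \<in> borel_measurable (PiM {..<k} (\<lambda>_. M))"
      by (rule measurable_cong) (use False in \<open>auto simp: space_PiM PiE_iff extensional_def\<close>)
    then show ?thesis by simp
  qed
  note bj[measurable]
  have e: "{\<omega>\<in>space (PiM {..<k} (\<lambda>_. M)). \<forall>j<k. beta (\<omega> j) \<le> b} = space (PiM {..<k} (\<lambda>_. M)) \<inter> (\<Inter>j<k. {\<omega>\<in>space (PiM {..<k} (\<lambda>_. M)). beta (\<omega> j) \<le> b})"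
    by auto
  have s: "{\<omega>\<in>space (PiM {..<k} (\<lambda>_. M)). \<forall>j<k. beta (\<omega> j) \<le> b} \<in> sets (PiM {..<k} (\<lambda>_. M))"
  proof -
    have "Measurable.pred (PiM {..<k} (\<lambda>_. M)) (\<lambda>\<omega>. \<forall>j\<in>{..<k}. beta (\<omega> j) \<le> b)"
      by (intro pred_intros_finite(3)) (auto intro: borel_measurable_le bj)
    then show ?thesis by (simp add: pred_def)
  qed
  have c: "(\<lambda>\<omega>. real (Suc (card {j. j < k \<and> beta (\<omega> j) = b}))) \<in> borel_measurable (PiM {..<k} (\<lambda>_. M))"
    unfolding of_nat_Suc card_sum by measurable
  show ?thesis
    by (intro measurable_If[OF _ _ s] borel_measurable_divide c) auto
qed


lemma aux2: "\<bar>a / real (Suc n)\<bar> \<le> \<bar>a\<bar>"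
proof -
  have "\<bar>a\<bar> / real (Suc n) \<le> \<bar>a\<bar> / 1" by (intro divide_left_mono) auto
  then show ?thesis by (simp add: abs_divide)
qed

lemma aux3: "a / real (Suc n) \<le> max a 0"
proof (cases "a \<ge> 0")
  case True
  then have "a / real (Suc n) \<le> a / 1" by (intro divide_left_mono) auto
  then show ?thesis by simp
next
  case False
  then have "a / real (Suc n) \<le> 0" by (intro divide_nonpos_pos) auto
  then show ?thesis by simp
qed

lemma integrand_int:
  fixes k :: nat and beta :: "real \<Rightarrow> real"
  assumes M: "real_distribution M" and beta: "beta \<in> borel_measurable borel"
  shows "integrable (PiM {..<k} (\<lambda>_. M)) (\<lambda>\<omega>. if (\<forall>j<k. beta (\<omega> j) \<le> b)
            then (v - b) / real (Suc (card {j. j < k \<and> beta (\<omega> j) = b}))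
            else 0)"
proof -
  interpret M: real_distribution M by (rule M)
  interpret P: prob_space "PiM {..<k} (\<lambda>_. M)" by (intro prob_space_PiM) (rule M.prob_space_axioms)
  show ?thesis
  proof (rule P.integrable_const_bound[where B="\<bar>v - b\<bar>"])
    show "AE x in PiM {..<k} (\<lambda>_. M). norm (if (\<forall>j<k. beta (x j) \<le> b)
            then (v - b) / real (Suc (card {j. j < k \<and> beta (x j) = b}))
            else 0) \<le> \<bar>v - b\<bar>"
    proof (intro AE_I2)
      fix x
      show "norm (if (\<forall>j<k. beta (x j) \<le> b)
            then (v - b) / real (Suc (card {j. j < k \<and> beta (x j) = b}))
            else 0) \<le> \<bar>v - b\<bar>"
        using aux2[of "v - b" "card {j. j < k \<and> beta (x j) = b}"] by (simp del: of_nat_Suc)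
    qed
  qed (intro integrand_meas beta M.events_eq_borel)
qed

lemma win_upper:
  fixes k :: nat and beta :: "real \<Rightarrow> real"
  assumes M: "real_distribution M" and beta: "beta \<in> borel_measurable borel"
  shows "win_util M beta k v b \<le> max (v - b) 0 * measure M {w. beta w \<le> b} ^ k"
proof -
  interpret M: real_distribution M by (rule M)
  interpret P: prob_space "PiM {..<k} (\<lambda>_. M)" by (intro prob_space_PiM) (rule M.prob_space_axioms)
  let ?P = "PiM {..<k} (\<lambda>_. M)"
  define S where "S = {\<omega>\<in>space ?P. \<forall>j<k. \<omega> j \<in> {w. beta w \<le> b}}"
  have A: "{w. beta w \<le> b} \<in> sets M"
  proof -
    have eq: "{w. beta w \<le> b} = beta -` {..b} \<inter> space borel" by auto
    show ?thesis unfolding eq M.events_eq_borel by (rule measurable_sets[OF beta]) simp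
  qed
  have Ssets: "S \<in> sets ?P"
  proof -
    have "Measurable.pred ?P (\<lambda>\<omega>. \<forall>j\<in>{..<k}. \<omega> j \<in> {w. beta w \<le> b})"
    proof (intro pred_intros_finite(3))
      fix j assume "j \<in> {..<k}"
      have A': "Measurable.pred M (\<lambda>w. w \<in> {w. beta w \<le> b})" using A by (simp add: pred_def)
      show "Measurable.pred ?P (\<lambda>\<omega>. \<omega> j \<in> {w. beta w \<le> b})"
        using measurable_compose[OF measurable_component_singleton[OF \<open>j \<in> {..<k}\<close>] A'] by simp
    qed simp
    then show ?thesis by (simp only: S_def pred_def Ball_def lessThan_iff)
  qed
  have "win_util M beta k v b \<le> integral\<^sup>L ?P (\<lambda>\<omega>. max (v - b) 0 * indicator S \<omega>)"
    unfolding win_util_def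
  proof (rule integral_mono)
    show "integrable ?P (\<lambda>\<omega>. max (v - b) 0 * indicator S \<omega>)"
      using Ssets by (intro integrable_mult_right integrable_real_indicator) (auto simp: P.emeasure_finite less_top[symmetric])
    fix \<omega> assume "\<omega> \<in> space ?P"
    then show "(if (\<forall>j<k. beta (\<omega> j) \<le> b)
            then (v - b) / real (Suc (card {j. j < k \<and> beta (\<omega> j) = b}))
            else 0) \<le> max (v - b) 0 * indicator S \<omega>"
    proof (cases "\<forall>j<k. beta (\<omega> j) \<le> b")
      case True
      with \<open>\<omega> \<in> space ?P\<close> have "\<omega> \<in> S" by (simp add: S_def)
      then show ?thesis using True aux3[of "v - b" "card {j. j < k \<and> beta (\<omega> j) = b}"]
        by (simp del: of_nat_Suc)
    next
      case False
      then have "\<omega> \<notin> S" by (auto simp: S_def)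
      then show ?thesis unfolding if_not_P[OF False] by simp
    qed
  qed (rule integrand_int[OF M beta])
  also have "\<dots> = max (v - b) 0 * measure ?P S"
    using Ssets by (simp add: P.emeasure_finite less_top[symmetric])
  also have "measure ?P S = measure M {w. beta w \<le> b} ^ k"
    unfolding S_def by (rule prod_prob[OF M.prob_space_axioms A])
  finally show ?thesis .
qed

lemma win_lower:
  fixes k :: nat and beta :: "real \<Rightarrow> real"
  assumes M: "real_distribution M" and beta: "beta \<in> borel_measurable borel" and vb: "b \<le> v"
  shows "(v - b) * measure M {w. beta w < b} ^ k \<le> win_util M beta k v b"
proof -
  interpret M: real_distribution M by (rule M)
  interpret P: prob_space "PiM {..<k} (\<lambda>_. M)" by (intro prob_space_PiM) (rule M.prob_space_axioms)
  let ?P = "PiM {..<k} (\<lambda>_. M)"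
  define S where "S = {\<omega>\<in>space ?P. \<forall>j<k. \<omega> j \<in> {w. beta w < b}}"
  have A: "{w. beta w < b} \<in> sets M"
  proof -
    have eq: "{w. beta w < b} = beta -` {..<b} \<inter> space borel" by auto
    show ?thesis unfolding eq M.events_eq_borel by (rule measurable_sets[OF beta]) simp
  qed
  have Ssets: "S \<in> sets ?P"
  proof -
    have "Measurable.pred ?P (\<lambda>\<omega>. \<forall>j\<in>{..<k}. \<omega> j \<in> {w. beta w < b})"
    proof (intro pred_intros_finite(3))
      fix j assume "j \<in> {..<k}"
      have A': "Measurable.pred M (\<lambda>w. w \<in> {w. beta w < b})" using A by (simp add: pred_def)
      show "Measurable.pred ?P (\<lambda>\<omega>. \<omega> j \<in> {w. beta w < b})"
        using measurable_compose[OF measurable_component_singleton[OF \<open>j \<in> {..<k}\<close>] A'] by simp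
    qed simp
    then show ?thesis by (simp only: S_def pred_def Ball_def lessThan_iff)
  qed
  have "measure M {w. beta w < b} ^ k = measure ?P S"
    unfolding S_def by (rule prod_prob[OF M.prob_space_axioms A, symmetric])
  then have "(v - b) * measure M {w. beta w < b} ^ k = integral\<^sup>L ?P (\<lambda>\<omega>. (v - b) * indicator S \<omega>)"
    using Ssets by (simp add: P.emeasure_finite less_top[symmetric])
  also have "\<dots> \<le> win_util M beta k v b"
    unfolding win_util_def
  proof (rule integral_mono)
    show "integrable ?P (\<lambda>\<omega>. (v - b) * indicator S \<omega>)"
      using Ssets by (intro integrable_mult_right integrable_real_indicator) (auto simp: P.emeasure_finite less_top[symmetric])
    fix \<omega> assume "\<omega> \<in> space ?P"
    then show "(v - b) * indicator S \<omega> \<le> (if (\<forall>j<k. beta (\<omega> j) \<le> b)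
            then (v - b) / real (Suc (card {j. j < k \<and> beta (\<omega> j) = b}))
            else 0)"
    proof (cases "\<omega> \<in> S")
      case True
      then have "\<forall>j<k. beta (\<omega> j) < b" by (simp add: S_def)
      then have c: "{j. j < k \<and> beta (\<omega> j) = b} = {}" "\<forall>j<k. beta (\<omega> j) \<le> b" by auto
      show ?thesis unfolding if_P[OF c(2)] c using True by simp
    next
      case False
      have "0 \<le> (if (\<forall>j<k. beta (\<omega> j) \<le> b)
            then (v - b) / real (Suc (card {j. j < k \<and> beta (\<omega> j) = b}))
            else 0)" using vb by (simp del: of_nat_Suc)
      then show ?thesis using False by simp
    qed
  qed (rule integrand_int[OF M beta])
  finally show ?thesis .
qed

lemma prob_F_le:
  assumes M: "real_distribution M" and cont: "\<forall>x. isCont (cdf M) x" and g0: "0 \<le> \<gamma>"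
  shows "measure M {w. cdf M w \<le> \<gamma>} \<le> \<gamma>"
proof -
  interpret M: real_distribution M by (rule M)
  let ?F = "cdf M"
  let ?T = "{w. ?F w \<le> \<gamma>}"
  show ?thesis
  proof (cases "\<gamma> \<ge> 1")
    case True
    then show ?thesis using M.prob_le_1[of ?T] by linarith
  next
    case False
    show ?thesis
    proof (cases "?T = {}")
      case True then show ?thesis using g0 by simp
    next
      case ne: False
      have "eventually (\<lambda>x. \<gamma> < ?F x) at_top"
        using order_tendstoD(1)[OF M.cdf_lim_at_top_prob] False by simp
      then obtain N where N: "\<And>x. x \<ge> N \<Longrightarrow> \<gamma> < ?F x" by (auto simp: eventually_at_top_linorder)
      have bdd: "bdd_above ?T"
      proof (rule bdd_aboveI[of _ N])
        fix w assume w: "w \<in> ?T"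
        show "w \<le> N"
        proof (rule ccontr)
          assume "\<not> w \<le> N"
          then have "\<gamma> < ?F w" using N[of w] by simp
          then show False using w by simp
        qed
      qed
      have cl: "closed ?T"
        by (rule closed_Collect_le) (use cont in \<open>auto intro: continuous_at_imp_continuous_on\<close>)
      have tin: "Sup ?T \<in> ?T" by (rule closed_contains_Sup[OF ne bdd cl])
      have sub: "?T \<subseteq> {..Sup ?T}" using cSup_upper[OF _ bdd] by auto
      have "measure M ?T \<le> measure M {..Sup ?T}"
        by (rule M.finite_measure_mono[OF sub]) simp
      also have "\<dots> = ?F (Sup ?T)" by (simp add: cdf_def)
      also have "\<dots> \<le> \<gamma>" using tin by simp
      finally show ?thesis .
    qed
  qed
qed

lemma prob_F_less:
  assumes M: "real_distribution M" and cont: "\<forall>x. isCont (cdf M) x"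
    and g0: "0 < \<gamma>" and g1: "\<gamma> \<le> 1"
  shows "\<gamma> \<le> measure M {w. cdf M w < \<gamma>}"
proof -
  interpret M: real_distribution M by (rule M)
  let ?F = "cdf M"
  let ?U = "{w. ?F w < \<gamma>}"
  show ?thesis
  proof (cases "\<forall>w. ?F w < \<gamma>")
    case True
    then have "?U = space M" by auto
    moreover have "measure M (space M) = 1" by (rule M.prob_space)
    ultimately show ?thesis using g1 by simp
  next
    case False
    then obtain x1 where x1: "\<gamma> \<le> ?F x1" by (auto simp: not_less)
    have bdd: "bdd_above ?U"
    proof (rule bdd_aboveI[of _ x1])
      fix w assume "w \<in> ?U"
      then show "w \<le> x1" using x1 M.cdf_nondecreasing[of x1 w] by (force simp: not_le[symmetric])
    qed
    have "eventually (\<lambda>x. ?F x < \<gamma>) at_bot"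
      using order_tendstoD(2)[OF M.cdf_lim_at_bot] g0 by simp
    then obtain N where N: "\<And>x. x \<le> N \<Longrightarrow> ?F x < \<gamma>" by (auto simp: eventually_at_bot_linorder)
    have ne: "?U \<noteq> {}" using N[of N] by auto
    define t where "t = Sup ?U"
    have sub: "{..<t} \<subseteq> ?U"
    proof
      fix y assume "y \<in> {..<t}"
      then obtain u where "u \<in> ?U" "y < u" using less_cSup_iff[OF ne bdd] by (auto simp: t_def)
      then show "y \<in> ?U" using M.cdf_nondecreasing[of y u] by auto
    qed
    have Ft: "\<gamma> \<le> ?F t"
    proof (rule ccontr)
      assume "\<not> \<gamma> \<le> ?F t"
      then have "?F t < \<gamma>" by simp
      moreover have "(?F \<longlongrightarrow> ?F t) (at_right t)"
        using cont by (simp add: isCont_def filterlim_at_split)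
      ultimately have "eventually (\<lambda>x. ?F x < \<gamma>) (at_right t)"
        using order_tendstoD(2) by blast
      then obtain b where b: "b > t" "\<And>y. t < y \<Longrightarrow> y < b \<Longrightarrow> ?F y < \<gamma>"
        by (auto simp: eventually_at_right_field)
      have "(t + b) / 2 \<in> ?U" using b by auto
      then have "(t + b) / 2 \<le> t" unfolding t_def by (rule cSup_upper[OF _ bdd])
      then show False using b by simp
    qed
    have "measure M {..t} \<le> measure M {..<t} + measure M {t}"
    proof -
      have "{..t} = {..<t} \<union> {t}" by auto
      then show ?thesis using measure_Un_le[of "{..<t}" M "{t}"] by simp
    qed
    moreover have "measure M {t} = 0" using cont M.isCont_cdf by blast
    moreover have "measure M {..<t} \<le> measure M ?U"
    proof (rule M.finite_measure_mono[OF sub])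
      have Fm: "cdf M \<in> borel_measurable borel"
        by (rule borel_measurable_mono) (auto simp: mono_def M.cdf_nondecreasing)
      have eq: "?U = cdf M -` {..<\<gamma>} \<inter> space borel" by auto
      show "?U \<in> sets M" unfolding eq by (intro M.sets_M measurable_sets[OF Fm]) simp
    qed
    ultimately show ?thesis using Ft by (simp add: cdf_def)
  qed
qed

lemma G_int: "mono (G::real\<Rightarrow>real) \<Longrightarrow> G integrable_on {a..b}"
  by (rule integrable_on_mono_on) (auto simp: mono_on_def mono_def)

lemma int_zero:
  assumes "\<And>x. x \<le> 0 \<Longrightarrow> (G::real\<Rightarrow>real) x = 0" "b \<le> 0"
  shows "integral {a..b} G = 0"
proof -
  have "integral {a..b} G = integral {a..b} (\<lambda>_. 0::real)"
    by (rule integral_cong) (use assms in auto)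
  then show ?thesis by simp
qed

lemma Phi_diff:
  fixes G :: "real \<Rightarrow> real"
  assumes mono: "mono G" and z: "\<And>x. x \<le> 0 \<Longrightarrow> G x = 0" and wv: "w \<le> v"
  shows "integral {0..v} G - integral {0..w} G = integral {w..v} G"
proof (cases "0 \<le> w")
  case True
  then show ?thesis using Henstock_Kurzweil_Integration.integral_combine[OF True wv G_int[OF mono]] by simp
next
  case False
  then have w0: "integral {0..w} G = 0" by simp
  show ?thesis
  proof (cases "0 \<le> v")
    case True
    have "integral {w..0} G + integral {0..v} G = integral {w..v} G"
      using Henstock_Kurzweil_Integration.integral_combine[of w 0 v G] False True G_int[OF mono] by simp
    moreover have "integral {w..0} G = 0" by (rule int_zero[OF z]) auto
    ultimately show ?thesis using w0 by simp
  next
    case False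
    then have "integral {0..v} G = 0" by simp
    moreover have "integral {w..v} G = 0" by (rule int_zero[OF z]) (use False in auto)
    ultimately show ?thesis using w0 by simp
  qed
qed

lemma Phi_bounds:
  fixes G :: "real \<Rightarrow> real"
  assumes mono: "mono G" and z: "\<And>x. x \<le> 0 \<Longrightarrow> G x = 0" and wv: "w \<le> v"
  shows "(v - w) * G w \<le> integral {0..v} G - integral {0..w} G"
    and "integral {0..v} G - integral {0..w} G \<le> (v - w) * G v"
proof -
  have "integral {w..v} (\<lambda>_. G w) \<le> integral {w..v} G"
    by (rule integral_le) (use G_int[OF mono] mono in \<open>auto simp: mono_def\<close>)
  then show "(v - w) * G w \<le> integral {0..v} G - integral {0..w} G"
    using Phi_diff[OF mono z wv] wv by simp
  have "integral {w..v} G \<le> integral {w..v} (\<lambda>_. G v)"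
    by (rule integral_le) (use G_int[OF mono] mono in \<open>auto simp: mono_def\<close>)
  then show "integral {0..v} G - integral {0..w} G \<le> (v - w) * G v"
    using Phi_diff[OF mono z wv] wv by simp
qed

locale Gfun =
  fixes G :: "real \<Rightarrow> real"
  assumes mono: "mono G" and z: "\<And>x. x \<le> 0 \<Longrightarrow> G x = 0" and cont: "\<And>x. isCont G x"
begin

definition Phi where "Phi x = integral {0..x} G"
definition bb where "bb w = w - inverse (G w) * Phi w"

lemma Gnn: "0 \<le> G x"
proof -
  have "G (min x 0) \<le> G x" using mono by (auto simp: mono_def)
  then show ?thesis using z[of "min x 0"] by simp
qed

lemma Phi0: "x \<le> 0 \<Longrightarrow> Phi x = 0"
  unfolding Phi_def by (cases "x < 0") (auto intro: int_zero[OF z])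

lemma bounds:
  assumes "w \<le> v"
  shows "(v - w) * G w \<le> Phi v - Phi w" "Phi v - Phi w \<le> (v - w) * G v"
  using Phi_bounds[OF mono z assms] by (auto simp: Phi_def)

lemma Phi_nn: "0 \<le> Phi x"
proof (cases "x \<le> 0")
  case True then show ?thesis by (simp add: Phi0)
next
  case False
  then have "(x - 0) * G 0 \<le> Phi x - Phi 0" by (intro bounds) auto
  then show ?thesis using Phi0[of 0] z[of 0] by simp
qed

lemma Phi_G0: "G x = 0 \<Longrightarrow> Phi x = 0"
proof (cases "x \<le> 0")
  case True then show ?thesis by (simp add: Phi0)
next
  case False
  assume "G x = 0"
  then have "Phi x - Phi 0 \<le> 0" using bounds(2)[of 0 x] False by simp
  then show ?thesis using Phi0[of 0] Phi_nn[of x] by simp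
qed

lemma Phi_mono: "mono Phi"
proof (rule monoI)
  fix x y :: real assume "x \<le> y"
  then show "Phi x \<le> Phi y" using bounds(1)[OF \<open>x \<le> y\<close>] Gnn[of x]
    by (smt (verit) mult_nonneg_nonneg)
qed

lemma bb_meas: "bb \<in> borel_measurable borel"
proof -
  have "G \<in> borel_measurable borel" by (rule borel_measurable_mono[OF mono])
  moreover have "Phi \<in> borel_measurable borel" by (rule borel_measurable_mono[OF Phi_mono])
  ultimately show ?thesis unfolding bb_def by measurable
qed

lemma dev_key: "(v - bb w) * G w \<le> Phi v"
proof (cases "G w = 0")
  case True then show ?thesis using Phi_nn by simp
next
  case False
  then have "(v - bb w) * G w = (v - w) * G w + Phi w" unfolding bb_def
    by (simp add: field_simps)
  also have "\<dots> \<le> Phi v"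
  proof (cases "w \<le> v")
    case True then show ?thesis using bounds(1)[OF True] by simp
  next
    case False
    then have "Phi w - Phi v \<le> (w - v) * G w" using bounds(2)[of v w] by simp
    then show ?thesis by (simp add: algebra_simps)
  qed
  finally show ?thesis .
qed

lemma eq_key: "G v > 0 \<Longrightarrow> (v - bb v) * G v = Phi v"
  unfolding bb_def by (simp add: field_simps)

lemma bb_le: "bb v \<le> v"
  unfolding bb_def using Phi_nn[of v] Gnn[of v] by simp

lemma strict:
  assumes lt: "G w < G v"
  shows "bb w < bb v"
proof -
  have wv: "w < v"
  proof (rule ccontr)
    assume "\<not> w < v"
    then have "G v \<le> G w" using mono by (auto simp: mono_def)
    then show False using lt by simp
  qed
  have Gv: "G v > 0" using lt Gnn[of w] by simp
  have "(G \<longlongrightarrow> G w) (at_right w)"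
    using cont[of w] by (simp add: isCont_def filterlim_at_split)
  then have "eventually (\<lambda>x. G x < G v) (at_right w)"
    using order_tendstoD(2) lt by blast
  then obtain c where c: "c > w" "\<And>y. w < y \<Longrightarrow> y < c \<Longrightarrow> G y < G v"
    by (auto simp: eventually_at_right_field)
  define w' where "w' = (w + min c v) / 2"
  have w': "w < w'" "w' < v" "G w' < G v" using c wv by (auto simp: w'_def)
  have "Phi v - Phi w = (Phi v - Phi w') + (Phi w' - Phi w)" by simp
  also have "\<dots> \<le> (v - w') * G v + (w' - w) * G w'"
    using bounds(2)[of w' v] bounds(2)[of w w'] w' by simp
  also have "\<dots> < (v - w') * G v + (w' - w) * G v"
    using w' by simp
  finally have A: "Phi v - Phi w < (v - w) * G v" by (simp add: algebra_simps)
  have B: "Phi w \<le> G v * (inverse (G w) * Phi w)"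
  proof (cases "G w = 0")
    case True then show ?thesis using Phi_G0 by simp
  next
    case False
    then have "G w > 0" using Gnn[of w] by simp
    then have "1 \<le> G v * inverse (G w)" using lt by (simp add: field_simps)
    then have "1 * Phi w \<le> (G v * inverse (G w)) * Phi w"
      by (intro mult_right_mono Phi_nn)
    then show ?thesis by (simp add: mult.assoc)
  qed
  have "G v * bb w \<le> G v * w - Phi w" unfolding bb_def using B by (simp add: algebra_simps)
  moreover have "G v * bb v = G v * v - Phi v" unfolding bb_def using Gv by (simp add: field_simps)
  ultimately have "G v * bb w < G v * bb v" using A by (simp add: algebra_simps)
  then show ?thesis using Gv by simp
qed

end

lemma Gfun_F:
  assumes M: "real_distribution M" and cont: "\<forall>x. isCont (cdf M) x" and F0: "cdf M 0 = 0"
    and k: "k \<ge> 1"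
  shows "Gfun (\<lambda>u. cdf M u ^ k)"
proof
  interpret M: real_distribution M by (rule M)
  show "mono (\<lambda>u. cdf M u ^ k)"
    by (rule monoI) (auto intro!: power_mono M.cdf_nondecreasing M.cdf_nonneg)
  fix x :: real
  show "x \<le> 0 \<Longrightarrow> cdf M x ^ k = 0"
    using M.cdf_nondecreasing[of x 0] M.cdf_nonneg[of x] F0 k by simp
  show "isCont (\<lambda>u. cdf M u ^ k) x" using cont by simp
qed


lemma sets_le_lt:
  fixes f :: "real \<Rightarrow> real"
  assumes M: "real_distribution M" and f: "f \<in> borel_measurable borel"
  shows "{w. f w \<le> c} \<in> sets M" "{w. f w < c} \<in> sets M"
proof -
  interpret M: real_distribution M by (rule M)
  have eq: "{w. f w \<le> c} = f -` {..c} \<inter> space borel" "{w. f w < c} = f -` {..<c} \<inter> space borel" by auto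
  show "{w. f w \<le> c} \<in> sets M" unfolding eq by (intro M.sets_M measurable_sets[OF f]) simp
  show "{w. f w < c} \<in> sets M" unfolding eq by (intro M.sets_M measurable_sets[OF f]) simp
qed

lemma per_n:
  assumes M: "real_distribution M" and cont: "\<forall>x. isCont (cdf M) x" and F0: "cdf M 0 = 0"
    and n: "n \<ge> 2" and Fv: "cdf M v > 0"
  shows "win_util M (\<lambda>w. be (cdf M) w n) (n - 1) v b
           \<le> win_util M (\<lambda>w. be (cdf M) w n) (n - 1) v (be (cdf M) v n)"
    and "0 \<le> win_util M (\<lambda>w. be (cdf M) w n) (n - 1) v (be (cdf M) v n)"
    and "win_util M (\<lambda>w. be (cdf M) w n) (n - 1) v (be (cdf M) v n) \<le> v"
proof -
  interpret M: real_distribution M by (rule M)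
  define k where "k = n - 1"
  have k: "k \<ge> 1" using n by (simp add: k_def)
  let ?F = "cdf M"
  let ?G = "\<lambda>u. ?F u ^ k"
  interpret G: Gfun ?G by (rule Gfun_F[OF M cont F0 k])
  have bew: "be ?F w n = G.bb w" for w unfolding be_def G.bb_def G.Phi_def by (simp only: k_def)
  have beq: "(\<lambda>w. be ?F w n) = G.bb" by (rule ext) (rule bew)
  have Weq: "win_util M (\<lambda>w. be ?F w n) (n - 1) v b' = win_util M G.bb k v b'" for b'
    unfolding beq by (simp only: k_def)
  let ?W = "win_util M G.bb k v"
  have Gv: "?G v > 0" using Fv by simp
  have upper: "?W b \<le> G.Phi v" for b
  proof -
    have "?W b \<le> max (v - b) 0 * measure M {w. G.bb w \<le> b} ^ k"
      by (rule win_upper[OF M G.bb_meas])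
    also have "\<dots> \<le> G.Phi v"
    proof (cases "v \<le> b")
      case True then show ?thesis using G.Phi_nn by simp
    next
      case False
      then have vb: "v - b > 0" by simp
      define c where "c = G.Phi v / (v - b)"
      have c0: "c \<ge> 0" using G.Phi_nn vb by (simp add: c_def)
      define \<gamma> where "\<gamma> = root k c"
      have g0: "\<gamma> \<ge> 0" using c0 by (simp add: \<gamma>_def real_root_ge_zero)
      have gk: "\<gamma> ^ k = c" using c0 k by (simp add: \<gamma>_def real_root_pow_pos2)
      have sub: "{w. G.bb w \<le> b} \<subseteq> {w. ?F w \<le> \<gamma>}"
      proof
        fix w assume "w \<in> {w. G.bb w \<le> b}"
        then have "G.bb w \<le> b" by simp
        then have "(v - b) * ?G w \<le> (v - G.bb w) * ?G w"
          by (intro mult_right_mono G.Gnn) simp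
        also have "\<dots> \<le> G.Phi v" by (rule G.dev_key)
        finally have "?G w \<le> c" using vb by (simp add: c_def field_simps)
        then have "root k (?G w) \<le> \<gamma>" unfolding \<gamma>_def using k by (simp add: real_root_le_iff)
        moreover have "root k (?G w) = ?F w" using k M.cdf_nonneg[of w] by (simp add: real_root_power_cancel)
        ultimately show "w \<in> {w. ?F w \<le> \<gamma>}" by simp
      qed
      have "measure M {w. G.bb w \<le> b} \<le> measure M {w. ?F w \<le> \<gamma>}"
        by (rule M.finite_measure_mono[OF sub sets_le_lt(1)[OF M]])
           (rule borel_measurable_mono, auto simp: mono_def M.cdf_nondecreasing)
      also have "\<dots> \<le> \<gamma>" by (rule prob_F_le[OF M cont g0])
      finally have "measure M {w. G.bb w \<le> b} ^ k \<le> \<gamma> ^ k"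
        by (intro power_mono) auto
      then have "(v - b) * measure M {w. G.bb w \<le> b} ^ k \<le> (v - b) * c"
        using gk vb by (intro mult_left_mono) auto
      then show ?thesis using vb False by (simp add: c_def)
    qed
    finally show ?thesis .
  qed
  have lower: "G.Phi v \<le> ?W (G.bb v)"
  proof -
    have sub: "{w. ?F w < ?F v} \<subseteq> {w. G.bb w < G.bb v}"
    proof
      fix w assume "w \<in> {w. ?F w < ?F v}"
      then have "?F w < ?F v" by simp
      then have "?G w < ?G v" using k M.cdf_nonneg[of w] by (intro power_strict_mono) auto
      then show "w \<in> {w. G.bb w < G.bb v}" using G.strict by simp
    qed
    have "?F v \<le> measure M {w. ?F w < ?F v}"
      by (rule prob_F_less[OF M cont Fv M.cdf_bounded_prob])
    also have "\<dots> \<le> measure M {w. G.bb w < G.bb v}"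
      by (rule M.finite_measure_mono[OF sub sets_le_lt(2)[OF M G.bb_meas]])
    finally have "?F v ^ k \<le> measure M {w. G.bb w < G.bb v} ^ k"
      by (intro power_mono) (auto simp: M.cdf_nonneg)
    then have "(v - G.bb v) * ?G v \<le> (v - G.bb v) * measure M {w. G.bb w < G.bb v} ^ k"
      using G.bb_le[of v] by (intro mult_left_mono) auto
    also have "\<dots> \<le> ?W (G.bb v)"
      by (rule win_lower[OF M G.bb_meas G.bb_le])
    finally show ?thesis using G.eq_key[OF Gv] by simp
  qed
  have Phiv: "G.Phi v \<le> v"
  proof -
    have v0: "v > 0"
    proof (rule ccontr)
      assume "\<not> v > 0"
      then have "?F v \<le> 0" using M.cdf_nondecreasing[of v 0] F0 by simp
      then show False using Fv by simp
    qed
    have "G.Phi v - G.Phi 0 \<le> (v - 0) * ?G v" by (rule G.bounds(2)) (use v0 in simp)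
    then have a: "G.Phi v \<le> v * ?G v" using G.Phi0[of 0] by simp
    have "?G v \<le> 1" by (rule power_le_one[OF M.cdf_nonneg M.cdf_bounded_prob])
    then have "v * ?G v \<le> v * 1" using v0 by (intro mult_left_mono) auto
    then show ?thesis using a by simp
  qed
  have W1: "win_util M (\<lambda>w. be ?F w n) (n - 1) v b = ?W b" by (rule Weq)
  have W2: "win_util M (\<lambda>w. be ?F w n) (n - 1) v (be ?F v n) = ?W (G.bb v)"
  proof -
    have "win_util M (\<lambda>w. be ?F w n) (n - 1) v (be ?F v n) = win_util M (\<lambda>w. be ?F w n) (n - 1) v (G.bb v)"
      by (simp only: bew[of v])
    also have "\<dots> = ?W (G.bb v)" by (rule Weq)
    finally show ?thesis .
  qed
  show "win_util M (\<lambda>w. be (cdf M) w n) (n - 1) v b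
           \<le> win_util M (\<lambda>w. be (cdf M) w n) (n - 1) v (be (cdf M) v n)"
    unfolding W1 W2 using upper[of b] lower by linarith
  show "0 \<le> win_util M (\<lambda>w. be (cdf M) w n) (n - 1) v (be (cdf M) v n)"
    unfolding W2 using lower G.Phi_nn[of v] by linarith
  show "win_util M (\<lambda>w. be (cdf M) w n) (n - 1) v (be (cdf M) v n) \<le> v"
    unfolding W2 using upper[of "G.bb v"] Phiv by linarith
qed

theorem proposition4:
  fixes M :: "real measure" and p :: "nat pmf"
  assumes "real_distribution M"
    and "\<forall>x. isCont (cdf M) x"
    and "cdf M 0 = 0"
    and "set_pmf p \<subseteq> {2..}"
  shows "all_register_equilibrium M p (\<lambda>v n. be (cdf M) v n)"
proof -
  note M = assms(1) and cont = assms(2) and F0 = assms(3) and p2 = assms(4)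
  interpret M: real_distribution M by (rule M)
  have N: "{w. cdf M w \<le> 0} \<in> null_sets M"
  proof -
    have Fm: "cdf M \<in> borel_measurable borel"
      by (rule borel_measurable_mono) (auto simp: mono_def M.cdf_nondecreasing)
    have s: "{w. cdf M w \<le> 0} \<in> sets M" by (rule sets_le_lt(1)[OF M Fm])
    have "measure M {w. cdf M w \<le> 0} \<le> 0" by (rule prob_F_le[OF M cont]) simp
    then have "measure M {w. cdf M w \<le> 0} = 0" using measure_nonneg[of M] by (simp add: order_antisym)
    then have "emeasure M {w. cdf M w \<le> 0} = 0" using s by (simp add: M.emeasure_eq_measure)
    then show ?thesis using s by (simp add: null_sets_def)
  qed
  have AE: "AE v in M. cdf M v > 0"
    by (rule AE_I'[OF N]) auto
  show ?thesis
    unfolding all_register_equilibrium_def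
  proof (rule AE_mp[OF AE], intro AE_I2 impI allI)
    fix v q r d
    assume Fv: "cdf M v > 0" and qp: "set_pmf q \<subseteq> set_pmf p"
    let ?h = "\<lambda>n. win_util M (\<lambda>w. be (cdf M) w n) (n - 1) v (be (cdf M) v n)"
    let ?f = "\<lambda>n. win_util M (\<lambda>w. be (cdf M) w n) (n - 1) v (d n)"
    have n2: "n \<ge> 2" if "n \<in> set_pmf q" for n using that qp p2 by auto
    have hle: "?f n \<le> ?h n" if "n \<in> set_pmf q" for n
      by (rule per_n(1)[OF M cont F0 n2[OF that] Fv])
    have h0: "0 \<le> ?h n" if "n \<in> set_pmf q" for n
      by (rule per_n(2)[OF M cont F0 n2[OF that] Fv])
    have hv: "?h n \<le> v" if "n \<in> set_pmf q" for n
      by (rule per_n(3)[OF M cont F0 n2[OF that] Fv])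
    have hint: "integrable (measure_pmf q) ?h"
    proof (rule measure_pmf.integrable_const_bound[where B=v])
      show "AE n in measure_pmf q. norm (?h n) \<le> v"
        unfolding AE_measure_pmf_iff using h0 hv by auto
    qed simp
    have E0: "0 \<le> measure_pmf.expectation q ?h"
      by (rule integral_nonneg_AE) (use h0 in \<open>auto simp: AE_measure_pmf_iff\<close>)
    have RHS: "interim_payoff M (\<lambda>v n. be (cdf M) v n) q v True (\<lambda>n. be (cdf M) v n)
               = measure_pmf.expectation q ?h"
      by (simp add: interim_payoff_def)
    show "interim_payoff M (\<lambda>v n. be (cdf M) v n) q v r d
          \<le> interim_payoff M (\<lambda>v n. be (cdf M) v n) q v True (\<lambda>n. be (cdf M) v n)"
    proof (cases r)
      case False
      then show ?thesis unfolding RHS using E0 by (simp add: interim_payoff_def)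
    next
      case True
      have L: "interim_payoff M (\<lambda>v n. be (cdf M) v n) q v r d = measure_pmf.expectation q ?f"
        using True by (simp add: interim_payoff_def)
      show ?thesis
      proof (cases "integrable (measure_pmf q) ?f")
        case True
        have "measure_pmf.expectation q ?f \<le> measure_pmf.expectation q ?h"
          by (rule integral_mono_AE[OF True hint]) (use hle in \<open>auto simp: AE_measure_pmf_iff\<close>)
        then show ?thesis unfolding L RHS .
      next
        case False
        then show ?thesis unfolding L RHS using E0 by (simp add: not_integrable_integral_eq)
      qed
    qed
  qed
qed

end
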